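(* Let $(X,d)$ be a compact metric space and let $f_1,f_2:X\to X$ be continuous. Suppose there is $c\in X$ with $f_1(x)=c$ for all $x\in X$, $f_2(c)=c$, and $f_2$ is Kato chaotic. Then the multiple mapping $F=\{f_1,f_2\}$ is (Hausdorff metric) Kato chaotic.
   Context: A continuous $f:X\to X$ is sensitive if there is $\delta>0$ such that for every nonempty open $U\subset X$ there exist $x,y\in U$, $n\in\mathbb{Z}^+$ with $d(f^n(x),f^n(y))>\delta$; accessible if for every $\epsilon>0$ and all nonempty open $U,V\subset X$ there exist $x\in U,y\in V,n\in\mathbb{Z}^+$ with $d(f^n(x),f^n(y))<\epsilon$; Kato chaotic if sensitive and accessible. For $F=\{f_1,f_2\}$ and $n\ge1$, $F^n(x)=\{f_{i_1}\cdots f_{i_n}(x)\mid i_1,\dots,i_n\in\{1,2\}\}$, and $d_H(A,B)=\max\{\sup_{a\in A}\inf_{b\in B}d(a,b),\sup_{b\in B}\inf_{a\in A}d(a,b)\}$ is the Hausdorff metric. $F$ is (Hausdorff metric) sensitive, resp. accessible, if the same definitions hold with $d(f^n(x),f^n(y))$ replaced by $d_H(F^n(x),F^n(y))$; $F$ is (Hausdorff metric) Kato chaotic if it is both. Here $\mathbb{Z}^+=\{1,2,\dots\}$. *)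

theory Defs
  imports "HOL-Analysis.Analysis"
begin

definition hausdorff_dist :: "'a::metric_space set \<Rightarrow> 'a set \<Rightarrow> real" where
  "hausdorff_dist A B =
     max (SUP a\<in>A. INF b\<in>B. dist a b) (SUP b\<in>B. INF a\<in>A. dist a b)"

definition sensitive :: "'a::metric_space set \<Rightarrow> ('a \<Rightarrow> 'a) \<Rightarrow> bool" where
  "sensitive X f \<longleftrightarrow> (\<exists>\<delta>>0. \<forall>U. openin (top_of_set X) U \<and> U \<noteq> {} \<longrightarrow>
      (\<exists>x\<in>U. \<exists>y\<in>U. \<exists>n\<ge>1. dist ((f ^^ n) x) ((f ^^ n) y) > \<delta>))"

definition accessible :: "'a::metric_space set \<Rightarrow> ('a \<Rightarrow> 'a) \<Rightarrow> bool" where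
  "accessible X f \<longleftrightarrow> (\<forall>\<epsilon>>0. \<forall>U V. openin (top_of_set X) U \<and> U \<noteq> {} \<and>
      openin (top_of_set X) V \<and> V \<noteq> {} \<longrightarrow>
      (\<exists>x\<in>U. \<exists>y\<in>V. \<exists>n\<ge>1. dist ((f ^^ n) x) ((f ^^ n) y) < \<epsilon>))"

definition kato_chaotic :: "'a::metric_space set \<Rightarrow> ('a \<Rightarrow> 'a) \<Rightarrow> bool" where
  "kato_chaotic X f \<longleftrightarrow> sensitive X f \<and> accessible X f"

fun multi_iter :: "('a \<Rightarrow> 'a) set \<Rightarrow> nat \<Rightarrow> 'a \<Rightarrow> 'a set" where
  "multi_iter F 0 x = {x}"
| "multi_iter F (Suc n) x = (\<Union>f\<in>F. f ` multi_iter F n x)"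

definition multi_sensitive :: "'a::metric_space set \<Rightarrow> ('a \<Rightarrow> 'a) set \<Rightarrow> bool" where
  "multi_sensitive X F \<longleftrightarrow> (\<exists>\<delta>>0. \<forall>U. openin (top_of_set X) U \<and> U \<noteq> {} \<longrightarrow>
      (\<exists>x\<in>U. \<exists>y\<in>U. \<exists>n\<ge>1.
         hausdorff_dist (multi_iter F n x) (multi_iter F n y) > \<delta>))"

definition multi_accessible :: "'a::metric_space set \<Rightarrow> ('a \<Rightarrow> 'a) set \<Rightarrow> bool" where
  "multi_accessible X F \<longleftrightarrow> (\<forall>\<epsilon>>0. \<forall>U V. openin (top_of_set X) U \<and> U \<noteq> {} \<and>
      openin (top_of_set X) V \<and> V \<noteq> {} \<longrightarrow>
      (\<exists>x\<in>U. \<exists>y\<in>V. \<exists>n\<ge>1.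
         hausdorff_dist (multi_iter F n x) (multi_iter F n y) < \<epsilon>))"

definition multi_kato_chaotic :: "'a::metric_space set \<Rightarrow> ('a \<Rightarrow> 'a) set \<Rightarrow> bool" where
  "multi_kato_chaotic X F \<longleftrightarrow> multi_sensitive X F \<and> multi_accessible X F"

end

theory Submission
  imports Defs
begin

lemma S2: "Sup {x, y::real} = max x y" by (simp add: cSup_insert sup_max)
lemma I2: "Inf {x, y::real} = min x y" by (simp add: cInf_insert inf_min)
lemma hd2: "hausdorff_dist {a, c} {b, c} =
   max (min (dist a b) (dist a c)) (min (dist a b) (dist b c))"
  unfolding hausdorff_dist_def
  by (simp add: dist_commute S2 I2 del: max_min_same)

lemma hd_le: "hausdorff_dist {a, c} {b, c} \<le> dist a b"
  unfolding hd2 by simp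

lemma hd_ge: "dist a b > d \<Longrightarrow> d \<ge> 0 \<Longrightarrow> hausdorff_dist {a, c} {b, c} > d / 2"
proof -
  assume h: "dist a b > d" "d \<ge> 0"
  have "dist a b \<le> dist a c + dist b c" by (metis dist_commute dist_triangle)
  then show ?thesis unfolding hd2 using h by linarith
qed

lemma iter_X: "x \<in> X \<Longrightarrow> f2 ` X \<subseteq> X \<Longrightarrow> (f2 ^^ n) x \<in> X"
proof (induction n)
  case 0 then show ?case by simp
next
  case (Suc n) then show ?case by (simp add: image_subset_iff)
qed

lemma L1: "(f2 ^^ Suc n) x = f2 ((f2 ^^ n) x)" by simp

lemma mi:
  assumes "x \<in> X" "f2 ` X \<subseteq> X" "\<forall>x\<in>X. f1 x = c" "f2 c = c" "c \<in> X"
  shows "multi_iter {f1, f2} (Suc n) x = {f2 ((f2 ^^ n) x), c}"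
proof (induction n)
  case 0
  have "multi_iter {f1, f2} (Suc 0) x = {f2 x, f1 x}" by simp
  moreover have "f1 x = c" using assms(1,3) by blast
  ultimately show ?case by simp
next
  case (Suc n)
  define a where "a = f2 ((f2 ^^ n) x)"
  have aX: "a \<in> X" using iter_X[OF assms(1,2), of "Suc n"] unfolding a_def L1 .
  have "multi_iter {f1, f2} (Suc (Suc n)) x = (\<Union>f\<in>{f1, f2}. f ` multi_iter {f1, f2} (Suc n) x)"
    by (rule multi_iter.simps(2))
  also have "\<dots> = (\<Union>f\<in>{f1, f2}. f ` {a, c})" unfolding Suc a_def ..
  also have "\<dots> = {f2 a, c}"
  proof -
    have "f1 a = c" "f1 c = c" using aX assms(3,5) by blast+
    then show ?thesis using assms(4) by auto
  qed
  also have "f2 a = f2 ((f2 ^^ Suc n) x)" unfolding a_def L1 ..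
  finally show ?case .
qed

lemma M_lemma:
  assumes "x \<in> X" "n \<ge> 1" "f2 ` X \<subseteq> X" "\<forall>x\<in>X. f1 x = c" "f2 c = c" "c \<in> X"
  shows "multi_iter {f1, f2} n x = {(f2 ^^ n) x, c}"
proof -
  obtain m where n: "n = Suc m" using assms(2) by (cases n) auto
  show ?thesis unfolding n L1 by (rule mi[OF assms(1,3,4,5,6)])
qed

lemma sens_lemma:
  fixes X :: "'a::metric_space set"
  assumes M: "\<And>x n. x \<in> X \<Longrightarrow> n \<ge> 1 \<Longrightarrow> G n x = {(g ^^ n) x, c}"
    and S: "sensitive X g"
  shows "\<exists>\<delta>>0. \<forall>U. openin (top_of_set X) U \<and> U \<noteq> {} \<longrightarrow>
      (\<exists>x\<in>U. \<exists>y\<in>U. \<exists>n\<ge>1. hausdorff_dist (G n x) (G n y) > \<delta>)"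
proof -
  obtain d where d: "d > 0" "\<And>U. openin (top_of_set X) U \<and> U \<noteq> {} \<Longrightarrow>
      (\<exists>x\<in>U. \<exists>y\<in>U. \<exists>n\<ge>1. dist ((g ^^ n) x) ((g ^^ n) y) > d)"
    using S unfolding sensitive_def by blast
  have "\<exists>x\<in>U. \<exists>y\<in>U. \<exists>n\<ge>1. hausdorff_dist (G n x) (G n y) > d/2"
    if U: "openin (top_of_set X) U \<and> U \<noteq> {}" for U
  proof -
    obtain x y n where xy: "x \<in> U" "y \<in> U" "n \<ge> 1"
        "dist ((g ^^ n) x) ((g ^^ n) y) > d" using d(2)[OF U] by blast
    have X: "x \<in> X" "y \<in> X" using xy(1,2) openin_imp_subset U by blast+
    have "hausdorff_dist (G n x) (G n y) > d/2"
      unfolding M[OF X(1) xy(3)] M[OF X(2) xy(3)]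
      by (rule hd_ge[OF xy(4)]) (use d(1) in simp)
    then show ?thesis using xy(1,2,3) by blast
  qed
  moreover have "d/2 > 0" using d(1) by simp
  ultimately show ?thesis by blast
qed

lemma acc_lemma:
  fixes X :: "'a::metric_space set"
  assumes M: "\<And>x n. x \<in> X \<Longrightarrow> n \<ge> 1 \<Longrightarrow> G n x = {(g ^^ n) x, c}"
    and A: "accessible X g"
  shows "\<forall>\<epsilon>>0. \<forall>U V. openin (top_of_set X) U \<and> U \<noteq> {} \<and>
      openin (top_of_set X) V \<and> V \<noteq> {} \<longrightarrow>
      (\<exists>x\<in>U. \<exists>y\<in>V. \<exists>n\<ge>1. hausdorff_dist (G n x) (G n y) < \<epsilon>)"
proof (intro allI impI)
  fix e :: real and U V
  assume e: "e > 0" and UV: "openin (top_of_set X) U \<and> U \<noteq> {} \<and>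
      openin (top_of_set X) V \<and> V \<noteq> {}"
  obtain x y n where xy: "x \<in> U" "y \<in> V" "n \<ge> 1"
        "dist ((g ^^ n) x) ((g ^^ n) y) < e"
    using A e UV unfolding accessible_def by blast
  have X: "x \<in> X" "y \<in> X" using xy(1,2) openin_imp_subset UV by blast+
  have "hausdorff_dist (G n x) (G n y) < e"
    unfolding M[OF X(1) xy(3)] M[OF X(2) xy(3)]
    using hd_le[of "(g ^^ n) x" c "(g ^^ n) y"] xy(4) by linarith
  then show "\<exists>x\<in>U. \<exists>y\<in>V. \<exists>n\<ge>1. hausdorff_dist (G n x) (G n y) < e"
    using xy(1,2,3) by blast
qed

theorem corollary3p12:
  fixes X :: "'a::metric_space set" and f1 f2 :: "'a \<Rightarrow> 'a" and c :: 'a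
  assumes "compact X"
    and "continuous_on X f1" and "f1 ` X \<subseteq> X"
    and "continuous_on X f2" and "f2 ` X \<subseteq> X"
    and "c \<in> X" and "\<forall>x\<in>X. f1 x = c" and "f2 c = c"
    and "kato_chaotic X f2"
  shows "multi_kato_chaotic X {f1, f2}"
proof -
  have M: "\<And>x n. x \<in> X \<Longrightarrow> n \<ge> 1 \<Longrightarrow> multi_iter {f1, f2} n x = {(f2 ^^ n) x, c}"
    by (rule M_lemma[OF _ _ assms(5,7,8,6)])
  have S: "sensitive X f2" and A: "accessible X f2"
    using assms(9) unfolding kato_chaotic_def by simp_all
  have 1: "multi_sensitive X {f1, f2}"
    unfolding multi_sensitive_def by (rule sens_lemma[OF M S])
  have 2: "multi_accessible X {f1, f2}"
    unfolding multi_accessible_def by (rule acc_lemma[OF M A])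
  show ?thesis unfolding multi_kato_chaotic_def using 1 2 by (rule conjI)
qed

end
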